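(* For real numbers $\ell_1,\ell_2>0$, the topology of $\mathcal{G}(\ell_1,\ell_2)$ is the compact-open topology. In particular it is metrizable. A sequence $(\phi_n)_{n\ge0}$ of $\mathcal{G}(\ell_1,\ell_2)$ converges to $\phi\in\mathcal{G}(\ell_1,\ell_2)$ if and only if it converges pointwise.
   Context: Work in $\mathbf{Top}$, the category of $\Delta$-generated spaces (or $\Delta$-Hausdorff $\Delta$-generated spaces), cartesian closed with internal hom ${\rm TOP}(X,Y)$ = set of continuous maps with the $\Delta$-kelleyfication of the compact-open topology ($\Delta$-kelleyfication: the right adjoint of the inclusion of $\Delta$-generated spaces into all topological spaces; it keeps the underlying set). $\mathcal{G}(\ell_1,\ell_2)$ is the set of nondecreasing homeomorphisms $[0,\ell_1]\to[0,\ell_2]$ equipped with the $\Delta$-kelleyfication of the relative topology induced by the inclusion into ${\rm TOP}([0,\ell_1],[0,\ell_2])$. *)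

theory Defs
  imports "HOL-Analysis.Analysis" "HOL-Homology.Simplices"
begin

text \<open>Maps are
represented extensionally (value undefined outside topspace X), so that a
continuous map corresponds to exactly one HOL function.  The subbasis consists of
the sets {f. f ` K \<subseteq> U}, K compact in X, U open in Y (taking K empty gives the
whole carrier).\<close>
definition cmaps :: "'a topology \<Rightarrow> 'b topology \<Rightarrow> ('a \<Rightarrow> 'b) set" where
  "cmaps X Y = {f. continuous_map X Y f \<and> f \<in> extensional (topspace X)}"

definition compact_open :: "'a topology \<Rightarrow> 'b topology \<Rightarrow> ('a \<Rightarrow> 'b) topology" where
  "compact_open X Y = topology_generated_by
     {{f \<in> cmaps X Y. f ` K \<subseteq> U} | K U. compactin X K \<and> openin Y U}"

definition delta_kelleyfication :: "'a topology \<Rightarrow> 'a topology" where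
  "delta_kelleyfication X = topology (\<lambda>U. U \<subseteq> topspace X \<and>
     (\<forall>n \<sigma>. continuous_map (subtopology (powertop_real UNIV) (standard_simplex n)) X \<sigma> \<longrightarrow>
        openin (subtopology (powertop_real UNIV) (standard_simplex n))
               {x \<in> standard_simplex n. \<sigma> x \<in> U}))"

definition TOP :: "'a topology \<Rightarrow> 'b topology \<Rightarrow> ('a \<Rightarrow> 'b) topology" where
  "TOP X Y = delta_kelleyfication (compact_open X Y)"

definition Gset :: "real \<Rightarrow> real \<Rightarrow> (real \<Rightarrow> real) set" where
  "Gset l1 l2 = {f. f \<in> extensional {0..l1} \<and>
      homeomorphic_map (top_of_set {0..l1}) (top_of_set {0..l2}) f \<and> mono_on {0..l1} f}"

definition Gtop :: "real \<Rightarrow> real \<Rightarrow> (real \<Rightarrow> real) topology" where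
  "Gtop l1 l2 = delta_kelleyfication
      (subtopology (TOP (top_of_set {0..l1}) (top_of_set {0..l2})) (Gset l1 l2))"

end

theory Submission
  imports Defs
begin


lemma G_ext: "f \<in> Gset l1 l2 \<Longrightarrow> f \<in> extensional {0..l1}"
  by (simp add: Gset_def)

lemma G_homeo: "f \<in> Gset l1 l2 \<Longrightarrow> homeomorphic_map (top_of_set {0..l1}) (top_of_set {0..l2}) f"
  by (simp add: Gset_def)

lemma G_mono: "f \<in> Gset l1 l2 \<Longrightarrow> x \<in> {0..l1} \<Longrightarrow> y \<in> {0..l1} \<Longrightarrow> x \<le> y \<Longrightarrow> f x \<le> f y"
  unfolding Gset_def mono_on_def by auto

lemma G_image: "f \<in> Gset l1 l2 \<Longrightarrow> f ` {0..l1} = {0..l2}"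
  using homeomorphic_imp_surjective_map[OF G_homeo] by fastforce

lemma G_range: "f \<in> Gset l1 l2 \<Longrightarrow> x \<in> {0..l1} \<Longrightarrow> f x \<in> {0..l2}"
  using G_image by blast

lemma G_cont: "f \<in> Gset l1 l2 \<Longrightarrow> continuous_on {0..l1} f"
  using homeomorphic_imp_continuous_map[OF G_homeo] by (simp add: continuous_map_subtopology_eu)

lemma G_inj: "f \<in> Gset l1 l2 \<Longrightarrow> inj_on f {0..l1}"
  using homeomorphic_imp_injective_map[OF G_homeo] by fastforce

lemma G_cmaps: "f \<in> Gset l1 l2 \<Longrightarrow> f \<in> cmaps (top_of_set {0..l1}) (top_of_set {0..l2})"
  unfolding cmaps_def using G_ext homeomorphic_imp_continuous_map[OF G_homeo] by auto

lemma G_eqI: "f \<in> Gset l1 l2 \<Longrightarrow> g \<in> Gset l1 l2 \<Longrightarrow> (\<And>x. x \<in> {0..l1} \<Longrightarrow> f x = g x) \<Longrightarrow> f = g"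
  using G_ext extensionalityI by metis

lemma G_strict: assumes "f \<in> Gset l1 l2" "x \<in> {0..l1}" "y \<in> {0..l1}" "x < y" shows "f x < f y"
proof -
  have "f x \<noteq> f y" using inj_onD[OF G_inj[OF assms(1)] _ assms(2) assms(3)] assms(4) by force
  then show ?thesis using G_mono[OF assms(1-3)] assms(4) by simp
qed

lemma G_0: assumes "f \<in> Gset l1 l2" "0 \<le> l1" "0 \<le> l2" shows "f 0 = 0"
proof -
  have "0 \<in> f ` {0..l1}" using G_image[OF assms(1)] assms by auto
  then obtain x where "x \<in> {0..l1}" "f x = 0" by auto
  then have "f 0 \<le> 0" using G_mono[OF assms(1), of 0 x] assms by auto
  moreover have "f 0 \<ge> 0" using G_range[OF assms(1), of 0] assms by auto
  ultimately show ?thesis by simp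
qed

lemma G_l1: assumes "f \<in> Gset l1 l2" "0 \<le> l1" "0 \<le> l2" shows "f l1 = l2"
proof -
  have "l2 \<in> f ` {0..l1}" using G_image[OF assms(1)] assms by auto
  then obtain x where "x \<in> {0..l1}" "f x = l2" by auto
  then have "f l1 \<ge> l2" using G_mono[OF assms(1), of x l1] assms by auto
  moreover have "f l1 \<le> l2" using G_range[OF assms(1), of l1] assms by auto
  ultimately show ?thesis by simp
qed

definition comb :: "real \<Rightarrow> real \<Rightarrow> (real \<Rightarrow> real) \<Rightarrow> (real \<Rightarrow> real) \<Rightarrow> real \<Rightarrow> real" where
  "comb l1 w f g = restrict (\<lambda>x. w * f x + (1 - w) * g x) {0..l1}"

lemma G_comb: assumes f: "f \<in> Gset l1 l2" and g: "g \<in> Gset l1 l2" and w: "0 \<le> w" "w \<le> 1"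
  and l: "0 < l1" "0 < l2"
  shows "comb l1 w f g \<in> Gset l1 l2"
proof -
  let ?h = "comb l1 w f g"
  have hx: "x \<in> {0..l1} \<Longrightarrow> ?h x = w * f x + (1 - w) * g x" for x by (simp add: comb_def)
  have ext: "?h \<in> extensional {0..l1}" by (simp add: comb_def)
  have strict: "?h x < ?h y" if "x \<in> {0..l1}" "y \<in> {0..l1}" "x < y" for x y
  proof -
    have a: "f x < f y" "g x < g y" using G_strict[OF f that] G_strict[OF g that] by auto
    have "w * f x + (1 - w) * g x < w * f y + (1 - w) * g y"
    proof (cases "w = 0")
      case True then show ?thesis using a by simp
    next
      case False
      then have "w * f x < w * f y" using a w by (intro mult_strict_left_mono) auto
      moreover have "(1 - w) * g x \<le> (1 - w) * g y" using a w by (intro mult_left_mono) auto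
      ultimately show ?thesis by simp
    qed
    then show ?thesis using that hx by simp
  qed
  have mono: "mono_on {0..l1} ?h"
  proof (rule mono_onI)
    fix x y assume "x \<in> {0..l1}" "y \<in> {0..l1}" "x \<le> y"
    then show "?h x \<le> ?h y" using strict[of x y] by (cases "x = y") auto
  qed
  have cont: "continuous_on {0..l1} ?h"
  proof -
    have "continuous_on {0..l1} (\<lambda>x. w * f x + (1 - w) * g x)"
      using G_cont[OF f] G_cont[OF g] by (intro continuous_intros)
    then show ?thesis by (rule continuous_on_eq) (simp add: hx)
  qed
  have h0: "?h 0 = 0" using hx[of 0] G_0[OF f] G_0[OF g] l by auto
  have hl: "?h l1 = l2" using hx[of l1] G_l1[OF f] G_l1[OF g] l by (auto simp: algebra_simps)
  have img: "?h ` {0..l1} = {0..l2}"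
  proof
    show "?h ` {0..l1} \<subseteq> {0..l2}"
    proof
      fix y assume "y \<in> ?h ` {0..l1}"
      then obtain x where x: "x \<in> {0..l1}" "y = ?h x" by auto
      have "?h 0 \<le> ?h x" "?h x \<le> ?h l1" using mono x l by (auto intro!: mono_onD[OF mono])
      then show "y \<in> {0..l2}" using h0 hl x by auto
    qed
    show "{0..l2} \<subseteq> ?h ` {0..l1}"
    proof
      fix y assume "y \<in> {0..l2}"
      then obtain x where "0 \<le> x" "x \<le> l1" "?h x = y"
        using IVT'[of ?h 0 y l1] cont h0 hl l by auto
      then show "y \<in> ?h ` {0..l1}" by force
    qed
  qed
  have inj: "inj_on ?h {0..l1}"
  proof (rule inj_onI)
    fix x y assume "x \<in> {0..l1}" "y \<in> {0..l1}" "?h x = ?h y"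
    then show "x = y" using strict[of x y] strict[of y x] by (cases x y rule: linorder_cases) auto
  qed
  have "homeomorphic_map (top_of_set {0..l1}) (top_of_set {0..l2}) ?h"
  proof (rule continuous_imp_homeomorphic_map)
    show "continuous_map (top_of_set {0..l1}) (top_of_set {0..l2}) ?h"
      using cont img by (simp add: continuous_map_subtopology_eu image_subset_iff_funcset[symmetric])
    show "compact_space (top_of_set {0..l1})"
      by (simp add: compact_space_subtopology)
    show "Hausdorff_space (top_of_set {0..l2})" by (simp add: Hausdorff_space_subtopology)
    show "?h ` topspace (top_of_set {0..l1}) = topspace (top_of_set {0..l2})" using img by simp
    show "inj_on ?h (topspace (top_of_set {0..l1}))" using inj by simp
  qed
  then show ?thesis using ext mono by (simp add: Gset_def)
qed



abbreviation SX :: "nat \<Rightarrow> (nat \<Rightarrow> real) topology" where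
  "SX n \<equiv> subtopology (powertop_real UNIV) (standard_simplex n)"

definition dkP :: "'a topology \<Rightarrow> 'a set \<Rightarrow> bool" where
  "dkP X U \<longleftrightarrow> U \<subseteq> topspace X \<and>
     (\<forall>n \<sigma>. continuous_map (SX n) X \<sigma> \<longrightarrow> openin (SX n) {x \<in> standard_simplex n. \<sigma> x \<in> U})"

lemma dk_eq: "delta_kelleyfication X = topology (dkP X)"
  unfolding delta_kelleyfication_def dkP_def by simp

lemma topspace_SX [simp]: "topspace (SX n) = standard_simplex n"
  by simp

lemma istopology_dkP: "istopology (dkP X)"
  unfolding istopology_def
proof (intro conjI allI impI)
  fix S T assume S: "dkP X S" and T: "dkP X T"
  show "dkP X (S \<inter> T)"
    unfolding dkP_def
  proof (intro conjI allI impI)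
    show "S \<inter> T \<subseteq> topspace X" using S by (auto simp: dkP_def)
    fix n \<sigma> assume c: "continuous_map (SX n) X \<sigma>"
    have "{x \<in> standard_simplex n. \<sigma> x \<in> S \<inter> T} =
          {x \<in> standard_simplex n. \<sigma> x \<in> S} \<inter> {x \<in> standard_simplex n. \<sigma> x \<in> T}" by auto
    moreover have "openin (SX n) {x \<in> standard_simplex n. \<sigma> x \<in> S}"
      using S c unfolding dkP_def by blast
    moreover have "openin (SX n) {x \<in> standard_simplex n. \<sigma> x \<in> T}"
      using T c unfolding dkP_def by blast
    ultimately show "openin (SX n) {x \<in> standard_simplex n. \<sigma> x \<in> S \<inter> T}"
      by (simp only:) (rule openin_Int)
  qed
next
  fix K assume K: "\<forall>S\<in>K. dkP X S"
  show "dkP X (\<Union>K)"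
    unfolding dkP_def
  proof (intro conjI allI impI)
    show "\<Union>K \<subseteq> topspace X" using K by (auto simp: dkP_def)
    fix n \<sigma> assume c: "continuous_map (SX n) X \<sigma>"
    have "{x \<in> standard_simplex n. \<sigma> x \<in> \<Union>K} =
          \<Union>((\<lambda>S. {x \<in> standard_simplex n. \<sigma> x \<in> S}) ` K)" by auto
    moreover have "openin (SX n) (\<Union>((\<lambda>S. {x \<in> standard_simplex n. \<sigma> x \<in> S}) ` K))"
      using K c unfolding dkP_def by (intro openin_Union) auto
    ultimately show "openin (SX n) {x \<in> standard_simplex n. \<sigma> x \<in> \<Union>K}" by simp
  qed
qed

lemma openin_dk: "openin (delta_kelleyfication X) U \<longleftrightarrow> dkP X U"
  by (simp add: dk_eq istopology_dkP)

lemma openin_dk_mono: "openin X U \<Longrightarrow> openin (delta_kelleyfication X) U"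
  unfolding openin_dk dkP_def
proof (intro conjI allI impI)
  assume U: "openin X U"
  then show "U \<subseteq> topspace X" by (simp add: openin_subset)
  fix n \<sigma> assume c: "continuous_map (SX n) X \<sigma>"
  have "openin (SX n) {x \<in> topspace (SX n). \<sigma> x \<in> U}"
    using openin_continuous_map_preimage[OF c U] .
  then show "openin (SX n) {x \<in> standard_simplex n. \<sigma> x \<in> U}" by simp
qed

lemma topspace_dk [simp]: "topspace (delta_kelleyfication X) = topspace X"
proof
  show "topspace (delta_kelleyfication X) \<subseteq> topspace X"
  proof
    fix x assume "x \<in> topspace (delta_kelleyfication X)"
    moreover have "dkP X (topspace (delta_kelleyfication X))"
      using openin_topspace[of "delta_kelleyfication X"] unfolding openin_dk .
    ultimately show "x \<in> topspace X" unfolding dkP_def by blast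
  qed
  have "dkP X (topspace X)"
    by (simp add: openin_dk_mono[of X "topspace X", unfolded openin_dk])
  then show "topspace X \<subseteq> topspace (delta_kelleyfication X)"
    by (simp add: openin_dk[symmetric] openin_subset)
qed

lemma cont_dk_simplex:
  "continuous_map (SX n) (delta_kelleyfication X) \<sigma> \<longleftrightarrow> continuous_map (SX n) X \<sigma>"
proof
  assume c: "continuous_map (SX n) (delta_kelleyfication X) \<sigma>"
  show "continuous_map (SX n) X \<sigma>"
    unfolding continuous_map_def
  proof (intro conjI allI impI)
    show "\<sigma> \<in> topspace (SX n) \<rightarrow> topspace X"
      using continuous_map_funspace[OF c] by simp
    fix U assume "openin X U"
    then have "openin (delta_kelleyfication X) U" by (rule openin_dk_mono)
    then show "openin (SX n) {x \<in> topspace (SX n). \<sigma> x \<in> U}"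
      by (rule openin_continuous_map_preimage[OF c])
  qed
next
  assume c: "continuous_map (SX n) X \<sigma>"
  show "continuous_map (SX n) (delta_kelleyfication X) \<sigma>"
    unfolding continuous_map_def
  proof (intro conjI allI impI)
    show "\<sigma> \<in> topspace (SX n) \<rightarrow> topspace (delta_kelleyfication X)"
      using continuous_map_funspace[OF c] by simp
    fix U assume "openin (delta_kelleyfication X) U"
    then have "dkP X U" by (simp add: openin_dk)
    then have "openin (SX n) {x \<in> standard_simplex n. \<sigma> x \<in> U}"
      using c unfolding dkP_def by blast
    then show "openin (SX n) {x \<in> topspace (SX n). \<sigma> x \<in> U}" by simp
  qed
qed

lemma topspace_CO [simp]: "topspace (compact_open X Y) = cmaps X Y"
  unfolding compact_open_def topology_generated_by_topspace
proof
  show "\<Union> {{f \<in> cmaps X Y. f ` K \<subseteq> U} |K U. compactin X K \<and> openin Y U} \<subseteq> cmaps X Y" by auto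
  have "cmaps X Y \<in> {{f \<in> cmaps X Y. f ` K \<subseteq> U} |K U. compactin X K \<and> openin Y U}"
    by (rule CollectI, rule exI[of _ "{}"], rule exI[of _ "{}"]) auto
  then show "cmaps X Y \<subseteq> \<Union> {{f \<in> cmaps X Y. f ` K \<subseteq> U} |K U. compactin X K \<and> openin Y U}"
    by blast
qed

lemma openin_CO_basic: "compactin X K \<Longrightarrow> openin Y U \<Longrightarrow> openin (compact_open X Y) {f \<in> cmaps X Y. f ` K \<subseteq> U}"
  unfolding compact_open_def openin_topology_generated_by_iff
  by (rule generate_topology_on.Basis) blast

lemma openin_Gtop:
  "openin (Gtop l1 l2) U \<longleftrightarrow> U \<subseteq> Gset l1 l2 \<and>
    (\<forall>n \<sigma>. continuous_map (SX n) (subtopology (compact_open (top_of_set {0..l1}) (top_of_set {0..l2})) (Gset l1 l2)) \<sigma>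
      \<longrightarrow> openin (SX n) {x \<in> standard_simplex n. \<sigma> x \<in> U})"
proof -
  let ?C = "compact_open (top_of_set {0..l1}) (top_of_set {0..l2})"
  have ts: "topspace (subtopology (delta_kelleyfication ?C) (Gset l1 l2)) = Gset l1 l2"
    using G_cmaps by auto
  have cm: "continuous_map (SX n) (subtopology (delta_kelleyfication ?C) (Gset l1 l2)) \<sigma> \<longleftrightarrow>
            continuous_map (SX n) (subtopology ?C (Gset l1 l2)) \<sigma>" for n \<sigma>
    by (simp add: continuous_map_in_subtopology cont_dk_simplex)
  show ?thesis
    unfolding Gtop_def TOP_def openin_dk dkP_def ts cm by simp
qed

definition gd :: "real \<Rightarrow> (real \<Rightarrow> real) \<Rightarrow> (real \<Rightarrow> real) \<Rightarrow> real" where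
  "gd l1 f g = max 0 (Sup ((\<lambda>x. \<bar>f x - g x\<bar>) ` {0..l1}))"

lemma gd_ge: assumes "f \<in> Gset l1 l2" "g \<in> Gset l1 l2" "x \<in> {0..l1}"
  shows "\<bar>f x - g x\<bar> \<le> gd l1 f g"
proof -
  have "bdd_above ((\<lambda>x. \<bar>f x - g x\<bar>) ` {0..l1})"
  proof (rule bdd_aboveI)
    fix y assume "y \<in> (\<lambda>x. \<bar>f x - g x\<bar>) ` {0..l1}"
    then obtain z where "z \<in> {0..l1}" "y = \<bar>f z - g z\<bar>" by auto
    then show "y \<le> l2" using G_range[OF assms(1), of z] G_range[OF assms(2), of z] by auto
  qed
  then have "\<bar>f x - g x\<bar> \<le> Sup ((\<lambda>x. \<bar>f x - g x\<bar>) ` {0..l1})"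
    using assms(3) by (intro cSup_upper) auto
  then show ?thesis unfolding gd_def by linarith
qed

lemma gd_le: assumes "0 \<le> e" "0 \<le> l1" "\<And>x. x \<in> {0..l1} \<Longrightarrow> \<bar>f x - g x\<bar> \<le> e"
  shows "gd l1 f g \<le> e"
proof -
  have "Sup ((\<lambda>x. \<bar>f x - g x\<bar>) ` {0..l1}) \<le> e"
    using assms by (intro cSup_least) auto
  then show ?thesis unfolding gd_def using assms(1) by linarith
qed

lemma gd_nonneg: "0 \<le> gd l1 f g" by (simp add: gd_def)

lemma Metric_G: assumes "0 \<le> l1" shows "Metric_space (Gset l1 l2) (gd l1)"
proof
  show "0 \<le> gd l1 x y" for x y by (rule gd_nonneg)
  show "gd l1 x y = gd l1 y x" for x y
    unfolding gd_def by (simp add: abs_minus_commute)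
  show "gd l1 x y = 0 \<longleftrightarrow> x = y" if "x \<in> Gset l1 l2" "y \<in> Gset l1 l2" for x y
  proof
    assume "gd l1 x y = 0"
    then have "\<And>z. z \<in> {0..l1} \<Longrightarrow> \<bar>x z - y z\<bar> \<le> 0" using gd_ge[OF that] by metis
    then show "x = y" using G_eqI[OF that] by force
  next
    assume "x = y"
    then have "gd l1 x y \<le> 0" using assms by (intro gd_le) auto
    then show "gd l1 x y = 0" using gd_nonneg by (metis order_antisym)
  qed
  show "gd l1 x z \<le> gd l1 x y + gd l1 y z" if "x \<in> Gset l1 l2" "y \<in> Gset l1 l2" "z \<in> Gset l1 l2" for x y z
  proof (rule gd_le)
    show "0 \<le> gd l1 x y + gd l1 y z" using gd_nonneg by (metis add_nonneg_nonneg)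
    show "0 \<le> l1" by fact
    fix t assume t: "t \<in> {0..l1}"
    have "\<bar>x t - z t\<bar> \<le> \<bar>x t - y t\<bar> + \<bar>y t - z t\<bar>" by linarith
    also have "\<dots> \<le> gd l1 x y + gd l1 y z" using gd_ge[OF that(1,2) t] gd_ge[OF that(2,3) t] by linarith
    finally show "\<bar>x t - z t\<bar> \<le> gd l1 x y + gd l1 y z" .
  qed
qed



lemma polya:
  assumes f: "f \<in> Gset l1 l2" and l: "0 < l1" and e: "0 < e"
  shows "\<exists>P. finite P \<and> P \<subseteq> {0..l1} \<and> P \<noteq> {} \<and>
     (\<forall>g \<in> Gset l1 l2. (\<forall>t\<in>P. \<bar>g t - f t\<bar> < e) \<longrightarrow> gd l1 f g \<le> 2 * e)"
proof -
  have "uniformly_continuous_on {0..l1} f"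
    using G_cont[OF f] by (intro compact_uniformly_continuous) auto
  then obtain \<delta> where \<delta>: "\<delta> > 0" and ucont: "\<And>x y. x \<in> {0..l1} \<Longrightarrow> y \<in> {0..l1} \<Longrightarrow> dist y x < \<delta> \<Longrightarrow> dist (f y) (f x) < e"
    unfolding uniformly_continuous_on_def using e by metis
  obtain N :: nat where N: "l1 / \<delta> < real N" using reals_Archimedean2 by blast
  have Npos: "N > 0" using N l \<delta> by (metis divide_pos_pos gr0I of_nat_0 order_less_asym)
  define h where "h = l1 / real N"
  have hpos: "h > 0" using Npos l by (simp add: h_def)
  have hd: "h < \<delta>" using N \<delta> Npos unfolding h_def by (simp add: field_simps)
  have Nh: "real N * h = l1" using Npos by (simp add: h_def)
  define P where "P = (\<lambda>k. real k * h) ` {0..N}"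
  have Psub: "P \<subseteq> {0..l1}"
  proof
    fix t assume "t \<in> P"
    then obtain k where k: "k \<le> N" "t = real k * h" by (auto simp: P_def)
    have "real k * h \<le> real N * h" using k hpos by (intro mult_right_mono) auto
    then show "t \<in> {0..l1}" using k hpos Nh by auto
  qed
  have memP: "real k * h \<in> P" if "k \<le> N" for k using that by (auto simp: P_def)
  have "\<forall>g \<in> Gset l1 l2. (\<forall>t\<in>P. \<bar>g t - f t\<bar> < e) \<longrightarrow> gd l1 f g \<le> 2 * e"
  proof (intro ballI impI)
    fix g assume g: "g \<in> Gset l1 l2" and close: "\<forall>t\<in>P. \<bar>g t - f t\<bar> < e"
    show "gd l1 f g \<le> 2 * e"
    proof (rule gd_le)
      show "0 \<le> 2 * e" "0 \<le> l1" using e l by auto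
      fix x assume x: "x \<in> {0..l1}"
      show "\<bar>f x - g x\<bar> \<le> 2 * e"
      proof (cases "x = l1")
        case True
        then have "x \<in> P" using memP[of N] Nh by simp
        then show ?thesis using close e by force
      next
        case False
        then have xl: "x < l1" using x by auto
        define k where "k = nat \<lfloor>x / h\<rfloor>"
        have k1: "real k = of_int \<lfloor>x / h\<rfloor>" using x hpos by (simp add: k_def)
        have "of_int \<lfloor>x / h\<rfloor> \<le> x / h" "x / h < of_int \<lfloor>x / h\<rfloor> + 1" by linarith+
        then have a: "real k \<le> x / h" "x / h < real k + 1" using k1 by linarith+
        have xh: "x / h * h = x" using hpos by simp
        have "real k * h \<le> x / h * h" using a(1) hpos by (intro mult_right_mono) auto
        moreover have "x / h * h < (real k + 1) * h" using a(2) hpos by (intro mult_strict_right_mono) auto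
        ultimately have k2: "real k * h \<le> x" "x < (real k + 1) * h" unfolding xh by auto
        have "real k * h < real N * h" using k2 xl Nh by linarith
        then have kN: "k < N" using hpos by simp
        define t1 where "t1 = real k * h"
        define t2 where "t2 = real (Suc k) * h"
        have t1P: "t1 \<in> P" using memP[of k] kN by (simp add: t1_def)
        have t2P: "t2 \<in> P" using memP[of "Suc k"] kN by (simp add: t2_def)
        have t1I: "t1 \<in> {0..l1}" and t2I: "t2 \<in> {0..l1}" using t1P t2P Psub by auto
        have t1x: "t1 \<le> x" "x - t1 \<le> h" using k2 by (auto simp: t1_def algebra_simps)
        have t2x: "x \<le> t2" "t2 - x \<le> h" using k2 by (auto simp: t2_def algebra_simps)
        have "dist t1 x < \<delta>" using t1x hd by (simp add: dist_real_def)
        then have f1: "\<bar>f t1 - f x\<bar> < e" using ucont[OF x t1I] by (simp add: dist_real_def)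
        have "dist t2 x < \<delta>" using t2x hd by (simp add: dist_real_def)
        then have f2: "\<bar>f t2 - f x\<bar> < e" using ucont[OF x t2I] by (simp add: dist_real_def)
        have g1: "g t1 \<le> g x" using G_mono[OF g t1I x t1x(1)] .
        have g2: "g x \<le> g t2" using G_mono[OF g x t2I t2x(1)] .
        have c1: "\<bar>g t1 - f t1\<bar> < e" using close t1P by blast
        have c2: "\<bar>g t2 - f t2\<bar> < e" using close t2P by blast
        show ?thesis using f1 f2 g1 g2 c1 c2 by linarith
      qed
    qed
  qed
  moreover have "finite P" by (simp add: P_def)
  moreover have "P \<noteq> {}" using memP[of 0] by auto
  ultimately show ?thesis using Psub by blast
qed

abbreviation CO :: "real \<Rightarrow> real \<Rightarrow> (real \<Rightarrow> real) topology" where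
  "CO l1 l2 \<equiv> compact_open (top_of_set {0..l1}) (top_of_set {0..l2})"

lemma CO_G_mtop:
  assumes l: "0 < l1" "0 < l2"
  shows "subtopology (CO l1 l2) (Gset l1 l2) = Metric_space.mtopology (Gset l1 l2) (gd l1)"
proof -
  interpret M: Metric_space "Gset l1 l2" "gd l1" using Metric_G l by simp
  let ?G = "Gset l1 l2"
  let ?I = "top_of_set {0..l1}" and ?J = "top_of_set {0..l2}"
  have fwd: "openin M.mtopology (V \<inter> ?G)" if "openin (CO l1 l2) V" for V
  proof -
    have "generate_topology_on {{f \<in> cmaps ?I ?J. f ` K \<subseteq> U} |K U. compactin ?I K \<and> openin ?J U} V"
      using that unfolding compact_open_def openin_topology_generated_by_iff .
    then show ?thesis
    proof induction
      case Empty
      then show ?case by simp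
    next
      case (Int a b)
      have "openin M.mtopology ((a \<inter> ?G) \<inter> (b \<inter> ?G))" by (rule openin_Int[OF Int.IH])
      moreover have "(a \<inter> ?G) \<inter> (b \<inter> ?G) = a \<inter> b \<inter> ?G" by blast
      ultimately show ?case by simp
    next
      case (UN K)
      then have "openin M.mtopology (\<Union>((\<lambda>k. k \<inter> ?G) ` K))" by (intro openin_Union) auto
      moreover have "\<Union>((\<lambda>k. k \<inter> ?G) ` K) = \<Union>K \<inter> ?G" by blast
      ultimately show ?case by simp
    next
      case (Basis s)
      then obtain K U where s: "s = {f \<in> cmaps ?I ?J. f ` K \<subseteq> U}" and K: "compactin ?I K" and U: "openin ?J U"
        by blast
      have Kc: "compact K" and KI: "K \<subseteq> {0..l1}" using K by (auto simp: compactin_subtopology)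
      obtain W where W: "open W" "U = {0..l2} \<inter> W" using U by (auto simp: openin_open)
      show ?case
        unfolding M.openin_mtopology
      proof (intro conjI allI impI)
        show "s \<inter> ?G \<subseteq> ?G" by blast
        fix f assume fs: "f \<in> s \<inter> ?G"
        then have fG: "f \<in> ?G" and fKU: "f ` K \<subseteq> U" using s by auto
        have "continuous_on K f" using G_cont[OF fG] KI continuous_on_subset by blast
        then have cK: "compact (f ` K)" using Kc by (rule compact_continuous_image)
        have "f ` K \<inter> (- W) = {}" using fKU W by auto
        then obtain r where r: "r > 0" and sep: "\<And>x y. x \<in> f ` K \<Longrightarrow> y \<in> - W \<Longrightarrow> r \<le> dist x y"
          using separate_compact_closed[OF cK] W(1) by (metis closed_Compl)
        show "\<exists>r>0. M.mball f r \<subseteq> s \<inter> ?G"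
        proof (intro exI conjI)
          show "r > 0" by fact
          show "M.mball f r \<subseteq> s \<inter> ?G"
          proof
            fix g assume "g \<in> M.mball f r"
            then have gG: "g \<in> ?G" and fg: "gd l1 f g < r" by auto
            have "g ` K \<subseteq> U"
            proof
              fix y assume "y \<in> g ` K"
              then obtain x where x: "x \<in> K" "y = g x" by auto
              have xI: "x \<in> {0..l1}" using x KI by auto
              have "g x \<in> W"
              proof (rule ccontr)
                assume "g x \<notin> W"
                then have "r \<le> dist (f x) (g x)" using sep[of "f x" "g x"] x by auto
                moreover have "dist (f x) (g x) \<le> gd l1 f g"
                  using gd_ge[OF fG gG xI] by (simp add: dist_real_def)
                ultimately show False using fg by linarith
              qed
              then show "y \<in> U" using W G_range[OF gG xI] x by auto
            qed
            then show "g \<in> s \<inter> ?G" using s gG G_cmaps[OF gG] by auto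
          qed
        qed
      qed
    qed
  qed
  have bwd: "openin (subtopology (CO l1 l2) ?G) S" if S: "openin M.mtopology S" for S
    unfolding openin_subopen[of _ S]
  proof
    fix f assume fS: "f \<in> S"
    have So: "S \<subseteq> ?G" "\<And>x. x \<in> S \<Longrightarrow> (\<exists>r>0. M.mball x r \<subseteq> S)"
      using M.openin_mtopology[THEN iffD1, OF S] by auto
    have fG: "f \<in> ?G" using So(1) fS by (rule subsetD)
    obtain r where r: "r > 0" "M.mball f r \<subseteq> S" using So(2)[OF fS] by (elim exE conjE)
    have r3: "0 < r / 3" using r by simp
    obtain P where P: "finite P" "P \<subseteq> {0..l1}" "P \<noteq> {}"
      and Pc0: "\<forall>g \<in> ?G. (\<forall>t\<in>P. \<bar>g t - f t\<bar> < r / 3) \<longrightarrow> gd l1 f g \<le> 2 * (r / 3)"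
      using polya[OF fG l(1) r3] by (elim exE conjE)
    have Pc: "gd l1 f g \<le> 2 * (r / 3)" if "g \<in> ?G" "\<forall>t\<in>P. \<bar>g t - f t\<bar> < r / 3" for g
      using Pc0 that by blast
    define B where "B t = {g \<in> cmaps ?I ?J. g ` {t} \<subseteq> {0..l2} \<inter> ball (f t) (r / 3)}" for t
    have Bo: "openin (CO l1 l2) (B t)" if "t \<in> P" for t
      unfolding B_def
    proof (rule openin_CO_basic)
      show "compactin ?I {t}" using that P by auto
      show "openin ?J ({0..l2} \<inter> ball (f t) (r / 3))" by (rule openin_open_Int) simp
    qed
    have "openin (CO l1 l2) (\<Inter>(B ` P))"
      using P Bo by (intro openin_Inter) auto
    then have o: "openin (subtopology (CO l1 l2) ?G) (\<Inter>(B ` P) \<inter> ?G)"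
      by (rule openin_subtopology_Int)
    have "f \<in> B t" if "t \<in> P" for t
    proof -
      have "t \<in> {0..l1}" using that P(2) by blast
      then have "f t \<in> {0..l2}" by (rule G_range[OF fG])
      moreover have "f t \<in> ball (f t) (r / 3)" using r3 by simp
      ultimately show ?thesis using G_cmaps[OF fG] unfolding B_def by blast
    qed
    then have fin: "f \<in> \<Inter>(B ` P) \<inter> ?G" using fG by blast
    have sub: "\<Inter>(B ` P) \<inter> ?G \<subseteq> S"
    proof
      fix g assume g: "g \<in> \<Inter>(B ` P) \<inter> ?G"
      then have gG: "g \<in> ?G" by blast
      have "\<forall>t\<in>P. \<bar>g t - f t\<bar> < r / 3"
      proof
        fix t assume "t \<in> P"
        then have "g t \<in> ball (f t) (r / 3)" using g by (auto simp: B_def)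
        then show "\<bar>g t - f t\<bar> < r / 3" by (simp add: dist_real_def abs_minus_commute)
      qed
      then have "gd l1 f g \<le> 2 * (r / 3)" using Pc gG by blast
      then have "g \<in> M.mball f r" using fG gG r by auto
      then show "g \<in> S" using r by blast
    qed
    show "\<exists>T. openin (subtopology (CO l1 l2) ?G) T \<and> f \<in> T \<and> T \<subseteq> S"
      using o fin sub by blast
  qed
  show ?thesis
    unfolding topology_eq
  proof (intro allI iffI)
    fix S assume "openin (subtopology (CO l1 l2) ?G) S"
    then obtain V where "openin (CO l1 l2) V" "S = V \<inter> ?G" by (auto simp: openin_subtopology)
    then show "openin M.mtopology S" using fwd by simp
  next
    fix S assume "openin M.mtopology S"
    then show "openin (subtopology (CO l1 l2) ?G) S" by (rule bwd)
  qed
qed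



definition aa :: "nat \<Rightarrow> real" where "aa n = 1 / (real n + 1)"

lemma aa_pos: "0 < aa n" by (simp add: aa_def)
lemma aa_le1: "aa n \<le> 1" by (simp add: aa_def)
lemma aa_0: "aa 0 = 1" by (simp add: aa_def)
lemma aa_anti: "i \<le> j \<Longrightarrow> aa j \<le> aa i"
  unfolding aa_def by (intro divide_left_mono) auto
lemma aa_strict: "i < j \<Longrightarrow> aa j < aa i"
  unfolding aa_def by (intro divide_strict_left_mono) auto
lemma aa_diff: "aa m - aa (Suc m) = 1 / ((real m + 1) * (real m + 2))"
  unfolding aa_def by (simp add: field_simps)

definition idx :: "real \<Rightarrow> nat" where "idx s = nat \<lfloor>1 / s\<rfloor> - 1"

lemma idx_prop: assumes "0 < s" "s \<le> 1" shows "aa (Suc (idx s)) < s" "s \<le> aa (idx s)"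
proof -
  define k where "k = \<lfloor>1 / s\<rfloor>"
  have "1 \<le> 1 / s" using assms by (simp add: field_simps)
  then have k1: "1 \<le> k" unfolding k_def by linarith
  have kk: "of_int k \<le> 1 / s" "1 / s < of_int k + 1" unfolding k_def by linarith+
  have r1: "real (idx s) + 1 = of_int k" using k1 by (simp add: idx_def k_def[symmetric] of_nat_diff)
  have r2: "real (Suc (idx s)) + 1 = of_int k + 1" using r1 by simp
  have kpos: "(0::real) < of_int k" using k1 by simp
  have "s * of_int k \<le> 1" using kk(1) assms(1) by (simp add: field_simps)
  then show "s \<le> aa (idx s)" unfolding aa_def r1 using kpos by (simp add: field_simps)
  have "1 < s * (of_int k + 1)" using kk(2) assms(1) by (simp add: field_simps)
  then show "aa (Suc (idx s)) < s" unfolding aa_def r2 using kpos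
    by (simp add: field_simps)
qed

lemma aa_unique: assumes "aa (Suc i) < s" "s \<le> aa i" "aa (Suc j) < s" "s \<le> aa j" shows "i = j"
proof (rule ccontr)
  assume "i \<noteq> j"
  then consider "Suc i \<le> j" | "Suc j \<le> i" by linarith
  then show False
  proof cases
    case 1 then have "aa j \<le> aa (Suc i)" by (rule aa_anti)
    then show False using assms by linarith
  next
    case 2 then have "aa i \<le> aa (Suc j)" by (rule aa_anti)
    then show False using assms by linarith
  qed
qed

lemma comb_1: "f \<in> Gset l1 l2 \<Longrightarrow> comb l1 1 f g = f"
  unfolding comb_def using G_ext[of f l1 l2]
  by (intro ext) (auto simp: restrict_def extensional_def)

lemma comb_0: "g \<in> Gset l1 l2 \<Longrightarrow> comb l1 0 f g = g"
  unfolding comb_def using G_ext[of g l1 l2]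
  by (intro ext) (auto simp: restrict_def extensional_def)

lemma comb_at: "x \<in> {0..l1} \<Longrightarrow> comb l1 w f g x = w * f x + (1 - w) * g x"
  by (simp add: comb_def)

lemma gd_comb_left:
  assumes h: "h \<in> Gset l1 l2" and f1: "f1 \<in> Gset l1 l2" and f2: "f2 \<in> Gset l1 l2"
    and w: "0 \<le> w" "w \<le> 1" and l: "0 < l1" "0 < l2"
  shows "gd l1 h (comb l1 w f1 f2) \<le> max (gd l1 h f1) (gd l1 h f2)"
proof (rule gd_le)
  show "0 \<le> max (gd l1 h f1) (gd l1 h f2)" using gd_nonneg by (metis max.coboundedI1)
  show "0 \<le> l1" using l by simp
  fix x assume x: "x \<in> {0..l1}"
  let ?M = "max (gd l1 h f1) (gd l1 h f2)"
  have e: "h x - comb l1 w f1 f2 x = w * (h x - f1 x) + (1 - w) * (h x - f2 x)"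
    using comb_at[OF x] by (simp add: algebra_simps)
  have "\<bar>w * (h x - f1 x) + (1 - w) * (h x - f2 x)\<bar> \<le> \<bar>w * (h x - f1 x)\<bar> + \<bar>(1 - w) * (h x - f2 x)\<bar>"
    by (rule abs_triangle_ineq)
  also have "\<dots> = w * \<bar>h x - f1 x\<bar> + (1 - w) * \<bar>h x - f2 x\<bar>"
    using w by (simp add: abs_mult)
  also have "\<dots> \<le> w * ?M + (1 - w) * ?M"
  proof (rule add_mono)
    show "w * \<bar>h x - f1 x\<bar> \<le> w * ?M"
      using gd_ge[OF h f1 x] w by (intro mult_left_mono) auto
    show "(1 - w) * \<bar>h x - f2 x\<bar> \<le> (1 - w) * ?M"
      using gd_ge[OF h f2 x] w by (intro mult_left_mono) auto
  qed
  also have "\<dots> = ?M" by (simp add: algebra_simps)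
  finally show "\<bar>h x - comb l1 w f1 f2 x\<bar> \<le> ?M" unfolding e .
qed

lemma gd_comb_diff:
  assumes f1: "f1 \<in> Gset l1 l2" and f2: "f2 \<in> Gset l1 l2" and l: "0 < l1"
  shows "gd l1 (comb l1 w f1 f2) (comb l1 v f1 f2) \<le> \<bar>w - v\<bar> * gd l1 f1 f2"
proof (rule gd_le)
  show "0 \<le> \<bar>w - v\<bar> * gd l1 f1 f2" using gd_nonneg by simp
  show "0 \<le> l1" using l by simp
  fix x assume x: "x \<in> {0..l1}"
  have e: "comb l1 w f1 f2 x - comb l1 v f1 f2 x = (w - v) * (f1 x - f2 x)"
    using comb_at[OF x] by (simp add: algebra_simps)
  have "\<bar>(w - v) * (f1 x - f2 x)\<bar> = \<bar>w - v\<bar> * \<bar>f1 x - f2 x\<bar>" by (simp add: abs_mult)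
  also have "\<dots> \<le> \<bar>w - v\<bar> * gd l1 f1 f2"
    using gd_ge[OF f1 f2 x] by (intro mult_left_mono) auto
  finally show "\<bar>comb l1 w f1 f2 x - comb l1 v f1 f2 x\<bar> \<le> \<bar>w - v\<bar> * gd l1 f1 f2" unfolding e .
qed



definition ww :: "nat \<Rightarrow> real \<Rightarrow> real" where
  "ww m s = (s - aa (Suc m)) / (aa m - aa (Suc m))"

lemma ww_range: assumes "aa (Suc m) \<le> s" "s \<le> aa m" shows "0 \<le> ww m s" "ww m s \<le> 1"
proof -
  have d: "0 < aa m - aa (Suc m)" using aa_strict[of m "Suc m"] by simp
  show "0 \<le> ww m s" unfolding ww_def using assms d by simp
  show "ww m s \<le> 1" unfolding ww_def using assms d by (simp add: divide_le_eq_1)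
qed

lemma ww_top: "ww m (aa m) = 1"
proof -
  have d: "0 < aa m - aa (Suc m)" using aa_strict[of m "Suc m"] by simp
  then show ?thesis unfolding ww_def by simp
qed

lemma ww_bot: "ww m (aa (Suc m)) = 0" unfolding ww_def by simp

lemma ww_diff: "\<bar>ww m s - ww m s'\<bar> = \<bar>s - s'\<bar> * ((real m + 1) * (real m + 2))"
proof -
  have "ww m s - ww m s' = (s - s') / (aa m - aa (Suc m))"
    unfolding ww_def by (simp add: diff_divide_distrib)
  also have "\<dots> = (s - s') * ((real m + 1) * (real m + 2))"
    unfolding aa_diff by simp
  finally show ?thesis by (simp add: abs_mult)
qed

locale pathctx =
  fixes l1 l2 :: real and f :: "real \<Rightarrow> real" and g :: "nat \<Rightarrow> real \<Rightarrow> real"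
  assumes l1: "0 < l1" and l2: "0 < l2" and fG: "f \<in> Gset l1 l2"
    and gG: "\<And>n. g n \<in> Gset l1 l2" and gdist: "\<And>n. gd l1 f (g n) \<le> aa n"
begin

definition tau :: "real \<Rightarrow> real \<Rightarrow> real" where
  "tau s = (if s \<le> 0 then f else comb l1 (ww (idx s) s) (g (idx s)) (g (Suc (idx s))))"

lemma tau_0: "tau 0 = f" by (simp add: tau_def)

lemma tau_piece: assumes "aa (Suc m) \<le> s" "s \<le> aa m"
  shows "tau s = comb l1 (ww m s) (g m) (g (Suc m))"
proof -
  have s0: "0 < s" using assms aa_pos[of "Suc m"] by linarith
  have s1: "s \<le> 1" using assms aa_le1[of m] by linarith
  have ip: "aa (Suc (idx s)) < s" "s \<le> aa (idx s)" using idx_prop[OF s0 s1] by auto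
  have t: "tau s = comb l1 (ww (idx s) s) (g (idx s)) (g (Suc (idx s)))"
    using s0 by (simp add: tau_def)
  show ?thesis
  proof (cases "s = aa (Suc m)")
    case False
    then have "aa (Suc m) < s" using assms by simp
    then have "idx s = m" using aa_unique[OF ip] assms by blast
    then show ?thesis using t by simp
  next
    case True
    have "aa (Suc (Suc m)) < s" using True aa_strict[of "Suc m" "Suc (Suc m)"] by simp
    then have "idx s = Suc m" using aa_unique[OF ip] True by blast
    then have "tau s = comb l1 1 (g (Suc m)) (g (Suc (Suc m)))" using t True ww_top by simp
    also have "\<dots> = g (Suc m)" by (rule comb_1[OF gG])
    also have "\<dots> = comb l1 (ww m s) (g m) (g (Suc m))"
      using True ww_bot comb_0[OF gG, symmetric] by simp
    finally show ?thesis .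
  qed
qed

lemma tau_aa: "tau (aa n) = g n"
proof -
  have "tau (aa n) = comb l1 (ww n (aa n)) (g n) (g (Suc n))"
    using aa_strict[of n "Suc n"] by (intro tau_piece) auto
  also have "\<dots> = g n" using ww_top comb_1[OF gG] by simp
  finally show ?thesis .
qed

lemma tau_G_piece: assumes "aa (Suc m) \<le> s" "s \<le> aa m" shows "tau s \<in> Gset l1 l2"
  unfolding tau_piece[OF assms] using ww_range[OF assms] gG l1 l2 by (intro G_comb) auto

lemma tau_G: assumes "s \<in> {0..1}" shows "tau s \<in> Gset l1 l2"
proof (cases "s = 0")
  case True then show ?thesis using fG tau_0 by simp
next
  case False
  then have s0: "0 < s" "s \<le> 1" using assms by auto
  show ?thesis using idx_prop[OF s0] by (intro tau_G_piece) auto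
qed

interpretation M: Metric_space "Gset l1 l2" "gd l1" using Metric_G l1 by simp

lemma gd_g_succ: "gd l1 (g m) (g (Suc m)) \<le> 2 / (real m + 1)"
proof -
  have "gd l1 (g m) (g (Suc m)) \<le> gd l1 (g m) f + gd l1 f (g (Suc m))"
    using M.triangle gG fG by blast
  also have "\<dots> \<le> aa m + aa (Suc m)" using gdist[of m] gdist[of "Suc m"] M.commute[of "g m" f] by simp
  also have "\<dots> \<le> aa m + aa m" using aa_anti[of m "Suc m"] by simp
  also have "\<dots> = 2 / (real m + 1)" by (simp add: aa_def)
  finally show ?thesis .
qed

lemma lip_piece: assumes "aa (Suc m) \<le> s" "s \<le> aa m" "aa (Suc m) \<le> s'" "s' \<le> aa m"
  shows "gd l1 (tau s) (tau s') \<le> 2 * (real m + 2) * \<bar>s - s'\<bar>"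
proof -
  have "gd l1 (tau s) (tau s') \<le> \<bar>ww m s - ww m s'\<bar> * gd l1 (g m) (g (Suc m))"
    unfolding tau_piece[OF assms(1,2)] tau_piece[OF assms(3,4)]
    by (rule gd_comb_diff[OF gG gG l1])
  also have "\<dots> \<le> (\<bar>s - s'\<bar> * ((real m + 1) * (real m + 2))) * (2 / (real m + 1))"
    unfolding ww_diff by (intro mult_left_mono gd_g_succ) auto
  also have "\<dots> = 2 * (real m + 2) * \<bar>s - s'\<bar>" by (simp add: field_simps)
  finally show ?thesis .
qed

lemma lip_aux: "N \<le> N0 \<Longrightarrow> s \<in> {aa N..1} \<Longrightarrow> s' \<in> {aa N..1} \<Longrightarrow> s \<le> s' \<Longrightarrow>
  gd l1 (tau s) (tau s') \<le> 2 * (real N0 + 2) * \<bar>s - s'\<bar>"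
proof (induction N arbitrary: s s')
  case 0
  then have "s = 1" "s' = 1" using aa_0 by auto
  then have "gd l1 (tau s) (tau s') = 0" using tau_G[of 1] by simp
  then show ?case by simp
next
  case (Suc N)
  let ?L = "2 * (real N0 + 2)"
  have L0: "0 \<le> ?L" by simp
  have pc: "2 * (real N + 2) \<le> ?L" using Suc.prems(1) by simp
  have aN: "aa N \<in> {aa N..1}" using aa_le1 by simp
  consider "aa N \<le> s" | "s' \<le> aa N" | "s < aa N" "aa N < s'" by linarith
  then show ?case
  proof cases
    case 1
    then show ?thesis using Suc.IH[of s s'] Suc.prems by auto
  next
    case 2
    have "gd l1 (tau s) (tau s') \<le> 2 * (real N + 2) * \<bar>s - s'\<bar>"
      using Suc.prems 2 by (intro lip_piece) auto
    also have "\<dots> \<le> ?L * \<bar>s - s'\<bar>" using pc by (intro mult_right_mono) auto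
    finally show ?thesis .
  next
    case 3
    have sG: "tau s \<in> Gset l1 l2" using Suc.prems aa_pos[of "Suc N"] by (intro tau_G) auto
    have s'G: "tau s' \<in> Gset l1 l2" using Suc.prems aa_pos[of "Suc N"] by (intro tau_G) auto
    have aG: "tau (aa N) \<in> Gset l1 l2" using aa_pos[of N] aa_le1[of N] by (intro tau_G) auto
    have "gd l1 (tau s) (tau s') \<le> gd l1 (tau s) (tau (aa N)) + gd l1 (tau (aa N)) (tau s')"
      using M.triangle sG s'G aG by blast
    also have "\<dots> \<le> 2 * (real N + 2) * \<bar>s - aa N\<bar> + ?L * \<bar>aa N - s'\<bar>"
    proof (rule add_mono)
      show "gd l1 (tau s) (tau (aa N)) \<le> 2 * (real N + 2) * \<bar>s - aa N\<bar>"
        using Suc.prems 3 by (intro lip_piece) auto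
      show "gd l1 (tau (aa N)) (tau s') \<le> ?L * \<bar>aa N - s'\<bar>"
        using Suc.IH[of "aa N" s'] Suc.prems 3 aN by auto
    qed
    also have "\<dots> \<le> ?L * \<bar>s - aa N\<bar> + ?L * \<bar>aa N - s'\<bar>"
      using pc by (intro add_right_mono mult_right_mono) auto
    also have "\<dots> = ?L * \<bar>s - s'\<bar>" using 3 by (simp add: algebra_simps)
    finally show ?thesis .
  qed
qed

lemma lip: assumes "s \<in> {aa N..1}" "s' \<in> {aa N..1}"
  shows "gd l1 (tau s) (tau s') \<le> 2 * (real N + 2) * \<bar>s - s'\<bar>"
proof (cases "s \<le> s'")
  case True then show ?thesis using lip_aux[of N N s s'] assms by simp
next
  case False
  then have "gd l1 (tau s') (tau s) \<le> 2 * (real N + 2) * \<bar>s' - s\<bar>" using lip_aux[of N N s' s] assms by simp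
  then show ?thesis using M.commute by (simp add: abs_minus_commute)
qed

lemma near0: assumes "0 < s" "s \<le> aa N" shows "gd l1 f (tau s) \<le> aa N"
proof -
  have s1: "s \<le> 1" using assms aa_le1[of N] by linarith
  define m where "m = idx s"
  have ip: "aa (Suc m) < s" "s \<le> aa m" using idx_prop[OF assms(1) s1] by (auto simp: m_def)
  have Nm: "N \<le> m"
  proof (rule ccontr)
    assume "\<not> N \<le> m" then have "Suc m \<le> N" by simp
    then have "aa N \<le> aa (Suc m)" by (rule aa_anti)
    then show False using ip assms by linarith
  qed
  have "gd l1 f (tau s) = gd l1 f (comb l1 (ww m s) (g m) (g (Suc m)))"
    using ip by (subst tau_piece[of m s]) auto
  also have "\<dots> \<le> max (gd l1 f (g m)) (gd l1 f (g (Suc m)))"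
    using ww_range[of m s] ip by (intro gd_comb_left[OF fG gG gG _ _ l1 l2]) auto
  also have "\<dots> \<le> aa N"
    using gdist[of m] gdist[of "Suc m"] aa_anti[OF Nm] aa_anti[of N "Suc m"] Nm by simp
  finally show ?thesis .
qed

lemma tau_cont: "continuous_map (top_of_set {0..1}) M.mtopology tau"
  unfolding M.continuous_map_to_metric
proof (intro ballI allI impI)
  fix s e assume s: "s \<in> topspace (top_of_set {0..(1::real)})" and e: "(0::real) < e"
  then have s01: "s \<in> {0..1}" by simp
  show "\<exists>U. openin (top_of_set {0..1}) U \<and> s \<in> U \<and> (\<forall>y\<in>U. tau y \<in> M.mball (tau s) e)"
  proof (cases "s = 0")
    case True
    obtain N :: nat where N: "1 / e < real N" using reals_Archimedean2 by blast
    have aNe: "aa N < e"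
    proof -
      have "1 < e * real N" using N e by (simp add: field_simps)
      then have "1 < e * (real N + 1)" using e by (simp add: algebra_simps)
      then show ?thesis unfolding aa_def using e by (simp add: field_simps)
    qed
    define U where "U = {0..(1::real)} \<inter> ball (0::real) (aa N)"
    have "openin (top_of_set {0..1}) U" unfolding U_def by (rule openin_open_Int) simp
    moreover have "s \<in> U" using True aa_pos by (simp add: U_def)
    moreover have "tau y \<in> M.mball (tau s) e" if y: "y \<in> U" for y
    proof -
      have y01: "y \<in> {0..1}" and ya: "y < aa N" using y by (auto simp: U_def dist_real_def)
      have tyG: "tau y \<in> Gset l1 l2" using tau_G[OF y01] .
      have "gd l1 f (tau y) < e"
      proof (cases "y = 0")
        case True then show ?thesis using tau_0 fG e by simp
      next
        case False
        then have "0 < y" using y01 by simp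
        then have "gd l1 f (tau y) \<le> aa N" using ya by (intro near0) auto
        then show ?thesis using aNe by linarith
      qed
      then show ?thesis using tyG fG True tau_0 by simp
    qed
    ultimately show ?thesis by blast
  next
    case False
    then have s0: "0 < s" "s \<le> 1" using s01 by auto
    obtain N :: nat where N: "1 / s < real N" using reals_Archimedean2 by blast
    have aNs: "aa N < s"
    proof -
      have "1 < s * real N" using N s0 by (simp add: field_simps)
      then have "1 < s * (real N + 1)" using s0 by (simp add: algebra_simps)
      then show ?thesis unfolding aa_def using s0 by (simp add: field_simps)
    qed
    define L where "L = 2 * (real N + 2)"
    have L0: "0 < L" by (simp add: L_def)
    define \<delta> where "\<delta> = min (s - aa N) (e / L)"
    have \<delta>0: "0 < \<delta>" using aNs e L0 by (simp add: \<delta>_def)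
    define U where "U = {0..(1::real)} \<inter> ball s \<delta>"
    have "openin (top_of_set {0..1}) U" unfolding U_def by (rule openin_open_Int) simp
    moreover have "s \<in> U" using s01 \<delta>0 by (simp add: U_def)
    moreover have "tau y \<in> M.mball (tau s) e" if y: "y \<in> U" for y
    proof -
      have y01: "y \<in> {0..1}" and yd: "\<bar>s - y\<bar> < \<delta>" using y by (auto simp: U_def dist_real_def)
      have yN: "y \<in> {aa N..1}" using y01 yd by (auto simp: \<delta>_def)
      have sN: "s \<in> {aa N..1}" using s0 aNs by auto
      have "gd l1 (tau s) (tau y) \<le> L * \<bar>s - y\<bar>" unfolding L_def by (rule lip[OF sN yN])
      also have "\<dots> < L * (e / L)"
      proof (rule mult_strict_left_mono)
        show "\<bar>s - y\<bar> < e / L" using yd by (simp add: \<delta>_def)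
      qed (rule L0)
      also have "\<dots> = e" using L0 by simp
      finally show ?thesis using tau_G[OF y01] tau_G[OF s01] by simp
    qed
    ultimately show ?thesis by blast
  qed
qed

end



lemma sum01: "(\<Sum>i\<le>(1::nat). x i) = x 0 + (x 1 :: real)"
  by (simp add: One_nat_def atMost_Suc)

definition qq :: "nat \<Rightarrow> nat \<Rightarrow> real" where
  "qq n = (\<lambda>i. if i = 0 then 1 - aa n else if i = 1 then aa n else 0)"
definition p0 :: "nat \<Rightarrow> real" where
  "p0 = (\<lambda>i. if i = 0 then 1 else 0)"

lemma qq_simplex: "qq n \<in> standard_simplex 1"
  unfolding standard_simplex_def sum01 using aa_pos[of n] aa_le1[of n] by (auto simp: qq_def)

lemma p0_simplex: "p0 \<in> standard_simplex 1"
  unfolding standard_simplex_def sum01 by (auto simp: p0_def)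

lemma aa_lim: "aa \<longlonglongrightarrow> 0"
proof -
  have "aa = (\<lambda>n. inverse (real (Suc n)))" by (auto simp: aa_def inverse_eq_divide)
  then show ?thesis using LIMSEQ_inverse_real_of_nat by simp
qed

lemma qq_lim: "limitin (SX 1) qq p0 sequentially"
  unfolding limitin_subtopology
proof (intro conjI)
  show "p0 \<in> standard_simplex 1" by (rule p0_simplex)
  show "\<forall>\<^sub>F x in sequentially. qq x \<in> standard_simplex 1" using qq_simplex by simp
  show "limitin (powertop_real UNIV) qq p0 sequentially"
    unfolding limitin_componentwise
  proof (intro conjI ballI)
    show "p0 \<in> extensional UNIV" by simp
    show "\<forall>\<^sub>F x in sequentially. qq x \<in> topspace (powertop_real UNIV)" by simp
    fix i :: nat
    show "limitin euclidean (\<lambda>c. qq c i) (p0 i) sequentially"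
    proof (cases "i = 0")
      case True
      have "(\<lambda>c. 1 - aa c) \<longlonglongrightarrow> 1 - 0" by (intro tendsto_diff tendsto_const aa_lim)
      then show ?thesis using True by (simp add: qq_def p0_def)
    next
      case False
      then show ?thesis using aa_lim by (cases "i = 1") (simp_all add: qq_def p0_def)
    qed
  qed
qed

lemma proj_cont: "continuous_map (SX 1) (top_of_set {0..1}) (\<lambda>x. x 1)"
proof -
  have "continuous_map (powertop_real UNIV) euclidean (\<lambda>x::nat\<Rightarrow>real. x 1)"
    by (rule continuous_map_product_projection) simp
  then have "continuous_map (SX 1) euclidean (\<lambda>x::nat\<Rightarrow>real. x 1)"
    by (rule continuous_map_from_subtopology)
  moreover have "(\<lambda>x::nat\<Rightarrow>real. x 1) \<in> topspace (SX 1) \<rightarrow> {0..1}"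
    by (auto simp: standard_simplex_def)
  ultimately show ?thesis by (simp add: continuous_map_in_subtopology)
qed

lemma Gtop_eq: assumes l1: "0 < l1" and l2: "0 < l2"
  shows "Gtop l1 l2 = subtopology (CO l1 l2) (Gset l1 l2)"
proof -
  interpret M: Metric_space "Gset l1 l2" "gd l1" using Metric_G l1 by simp
  have mt: "subtopology (CO l1 l2) (Gset l1 l2) = M.mtopology" by (rule CO_G_mtop[OF l1 l2])
  show ?thesis
    unfolding topology_eq
  proof (intro allI iffI)
    fix U assume UG: "openin (Gtop l1 l2) U"
    have U: "U \<subseteq> Gset l1 l2" using openin_Gtop[THEN iffD1, OF UG] by blast
    have Us: "openin (SX n) {x \<in> standard_simplex n. \<sigma> x \<in> U}"
      if "continuous_map (SX n) (subtopology (CO l1 l2) (Gset l1 l2)) \<sigma>" for n \<sigma>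
      using openin_Gtop[THEN iffD1, OF UG] that by blast
    show "openin (subtopology (CO l1 l2) (Gset l1 l2)) U"
      unfolding mt M.openin_mtopology
    proof (intro conjI allI impI)
      show "U \<subseteq> Gset l1 l2" by fact
      fix f assume fU: "f \<in> U"
      have fG: "f \<in> Gset l1 l2" using U fU by blast
      show "\<exists>r>0. M.mball f r \<subseteq> U"
      proof (rule ccontr)
        assume nr: "\<not> (\<exists>r>0. M.mball f r \<subseteq> U)"
        have "\<forall>n. \<exists>h. h \<in> Gset l1 l2 \<and> gd l1 f h \<le> aa n \<and> h \<notin> U"
        proof
          fix n
          have "\<not> M.mball f (aa n) \<subseteq> U" using nr aa_pos[of n] by blast
          then obtain h where "h \<in> M.mball f (aa n)" "h \<notin> U" by blast
          then show "\<exists>h. h \<in> Gset l1 l2 \<and> gd l1 f h \<le> aa n \<and> h \<notin> U" by auto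
        qed
        then have "\<exists>g. \<forall>n. g n \<in> Gset l1 l2 \<and> gd l1 f (g n) \<le> aa n \<and> g n \<notin> U"
          by (rule choice)
        then obtain g where g: "\<And>n. g n \<in> Gset l1 l2" "\<And>n. gd l1 f (g n) \<le> aa n" "\<And>n. g n \<notin> U"
          by blast
        interpret P: pathctx l1 l2 f g
          using l1 l2 fG g by unfold_locales auto
        define \<sigma> :: "(nat \<Rightarrow> real) \<Rightarrow> real \<Rightarrow> real" where "\<sigma> = P.tau \<circ> (\<lambda>x. x 1)"
        have "continuous_map (SX 1) M.mtopology \<sigma>"
          unfolding \<sigma>_def by (rule continuous_map_compose[OF proj_cont P.tau_cont])
        then have "continuous_map (SX 1) (subtopology (CO l1 l2) (Gset l1 l2)) \<sigma>" unfolding mt .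
        then have W: "openin (SX 1) {x \<in> standard_simplex 1. \<sigma> x \<in> U}" by (rule Us)
        have p0W: "p0 \<in> {x \<in> standard_simplex 1. \<sigma> x \<in> U}"
          using p0_simplex P.tau_0 fU by (simp add: \<sigma>_def p0_def)
        have "eventually (\<lambda>n. qq n \<in> {x \<in> standard_simplex 1. \<sigma> x \<in> U}) sequentially"
          using qq_lim W p0W unfolding limitin_def by blast
        then obtain N where "\<And>n. n \<ge> N \<Longrightarrow> qq n \<in> {x \<in> standard_simplex 1. \<sigma> x \<in> U}"
          unfolding eventually_sequentially by blast
        then have "\<sigma> (qq N) \<in> U" by blast
        moreover have "\<sigma> (qq N) = g N" by (simp add: \<sigma>_def qq_def P.tau_aa)
        ultimately show False using g(3) by simp
      qed
    qed
  next
    fix U assume UC: "openin (subtopology (CO l1 l2) (Gset l1 l2)) U"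
    have "U \<subseteq> topspace (subtopology (CO l1 l2) (Gset l1 l2))" using UC by (rule openin_subset)
    then have U: "U \<subseteq> Gset l1 l2" by simp
    show "openin (Gtop l1 l2) U"
      unfolding openin_Gtop
    proof (intro conjI allI impI)
      show "U \<subseteq> Gset l1 l2" by fact
      fix n \<sigma> assume c: "continuous_map (SX n) (subtopology (CO l1 l2) (Gset l1 l2)) \<sigma>"
      have "openin (SX n) {x \<in> topspace (SX n). \<sigma> x \<in> U}"
        by (rule openin_continuous_map_preimage[OF c UC])
      then show "openin (SX n) {x \<in> standard_simplex n. \<sigma> x \<in> U}" by simp
    qed
  qed
qed

theorem proposition2p5:
  fixes l1 l2 :: real
  assumes "l1 > 0" and "l2 > 0"
  shows "Gtop l1 l2 = subtopology (compact_open (top_of_set {0..l1}) (top_of_set {0..l2})) (Gset l1 l2)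
     \<and> metrizable_space (Gtop l1 l2)
     \<and> (\<forall>(\<phi>s :: nat \<Rightarrow> real \<Rightarrow> real) \<phi>. (\<forall>n. \<phi>s n \<in> Gset l1 l2) \<longrightarrow> \<phi> \<in> Gset l1 l2 \<longrightarrow>
          (limitin (Gtop l1 l2) \<phi>s \<phi> sequentially \<longleftrightarrow>
           (\<forall>t \<in> {0..l1}. (\<lambda>n. \<phi>s n t) \<longlonglongrightarrow> \<phi> t)))"
proof -
  interpret M: Metric_space "Gset l1 l2" "gd l1" using Metric_G assms(1) by simp
  have eq1: "Gtop l1 l2 = subtopology (CO l1 l2) (Gset l1 l2)" by (rule Gtop_eq[OF assms])
  have eq2: "Gtop l1 l2 = M.mtopology" unfolding eq1 by (rule CO_G_mtop[OF assms])
  have met: "metrizable_space (Gtop l1 l2)" unfolding eq2 by (rule M.metrizable_space_mtopology)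
  have seq: "limitin (Gtop l1 l2) \<phi>s \<phi> sequentially \<longleftrightarrow> (\<forall>t \<in> {0..l1}. (\<lambda>n. \<phi>s n t) \<longlonglongrightarrow> \<phi> t)"
    if \<phi>s: "\<And>n. \<phi>s n \<in> Gset l1 l2" and \<phi>: "\<phi> \<in> Gset l1 l2" for \<phi>s \<phi>
  proof
    assume "limitin (Gtop l1 l2) \<phi>s \<phi> sequentially"
    then have L: "\<And>e. e > 0 \<Longrightarrow> eventually (\<lambda>n. \<phi>s n \<in> Gset l1 l2 \<and> gd l1 (\<phi>s n) \<phi> < e) sequentially"
      unfolding eq2 M.limitin_metric by blast
    show "\<forall>t \<in> {0..l1}. (\<lambda>n. \<phi>s n t) \<longlonglongrightarrow> \<phi> t"
    proof
      fix t assume t: "t \<in> {0..l1}"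
      show "(\<lambda>n. \<phi>s n t) \<longlonglongrightarrow> \<phi> t"
        unfolding tendsto_iff
      proof (intro allI impI)
        fix e :: real assume e: "e > 0"
        show "eventually (\<lambda>n. dist (\<phi>s n t) (\<phi> t) < e) sequentially"
          using L[OF e]
        proof (rule eventually_mono)
          fix n assume A: "\<phi>s n \<in> Gset l1 l2 \<and> gd l1 (\<phi>s n) \<phi> < e"
          have "\<bar>\<phi>s n t - \<phi> t\<bar> \<le> gd l1 (\<phi>s n) \<phi>" by (rule gd_ge[OF \<phi>s \<phi> t])
          then show "dist (\<phi>s n t) (\<phi> t) < e"
            using A unfolding dist_real_def by linarith
        qed
      qed
    qed
  next
    assume pw: "\<forall>t \<in> {0..l1}. (\<lambda>n. \<phi>s n t) \<longlonglongrightarrow> \<phi> t"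
    show "limitin (Gtop l1 l2) \<phi>s \<phi> sequentially"
      unfolding eq2 M.limitin_metric
    proof (intro conjI allI impI)
      show "\<phi> \<in> Gset l1 l2" by fact
      fix e :: real assume e: "e > 0"
      have e3: "0 < e / 3" using e by simp
      obtain P where P: "finite P" "P \<subseteq> {0..l1}" "P \<noteq> {}"
        and Pc0: "\<forall>g \<in> Gset l1 l2. (\<forall>t\<in>P. \<bar>g t - \<phi> t\<bar> < e / 3) \<longrightarrow> gd l1 \<phi> g \<le> 2 * (e / 3)"
        using polya[OF \<phi> assms(1) e3] by (elim exE conjE)
      have "\<forall>t\<in>P. eventually (\<lambda>n. dist (\<phi>s n t) (\<phi> t) < e / 3) sequentially"
      proof
        fix t assume "t \<in> P"
        then have "(\<lambda>n. \<phi>s n t) \<longlonglongrightarrow> \<phi> t" using pw P(2) by blast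
        then show "eventually (\<lambda>n. dist (\<phi>s n t) (\<phi> t) < e / 3) sequentially"
          using e3 unfolding tendsto_iff by blast
      qed
      then have "eventually (\<lambda>n. \<forall>t\<in>P. dist (\<phi>s n t) (\<phi> t) < e / 3) sequentially"
        by (rule eventually_ball_finite[OF P(1)])
      then show "eventually (\<lambda>n. \<phi>s n \<in> Gset l1 l2 \<and> gd l1 (\<phi>s n) \<phi> < e) sequentially"
      proof (rule eventually_mono)
        fix n assume "\<forall>t\<in>P. dist (\<phi>s n t) (\<phi> t) < e / 3"
        then have "\<forall>t\<in>P. \<bar>\<phi>s n t - \<phi> t\<bar> < e / 3" by (simp add: dist_real_def)
        then have "gd l1 \<phi> (\<phi>s n) \<le> 2 * (e / 3)" using Pc0 \<phi>s by blast
        then have "gd l1 (\<phi>s n) \<phi> < e" using M.commute[of "\<phi>s n" \<phi>] e by simp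
        then show "\<phi>s n \<in> Gset l1 l2 \<and> gd l1 (\<phi>s n) \<phi> < e" using \<phi>s by simp
      qed
    qed
  qed
  show ?thesis using eq1 met seq by blast
qed


end
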